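(* For every integer $t\ge 1$, with $v=4t+1$, the $(v,2,1)$-BIBD on a $v$-set $X$ (whose blocks are all $2$-subsets of $X$) has a strong nesting $\phi:\mathcal{A}\to Y$ with $X\subseteq Y$ and $|Y|=w=6t+2$, and this is optimal: no strong nesting of this BIBD has $|Y|<6t+2$.
   Context: A $(v,k,\lambda)$-BIBD is a pair $(X,\mathcal{A})$ where $X$ is a set of $v$ points and $\mathcal{A}$ is a multiset of $k$-subsets of $X$ (blocks) such that every pair of distinct points lies in exactly $\lambda$ blocks. Given a $(v,k,\lambda)$-BIBD $(X,\mathcal{A})$ and a set $Y\supseteq X$ with $|Y|=w$, a map $\phi:\mathcal{A}\to Y$ is a strong nesting if (1) $\phi(A)\notin A$ for every block $A\in\mathcal{A}$, and (2) the multiset of pairs $\{\{x,\phi(A)\}: A\in\mathcal{A},\ x\in A\}$ (one pair for each block $A$, counted with multiplicity in $\mathcal{A}$, and each $x\in A$) consists of distinct pairs. A strong nesting is optimal if $w=|Y|$ is as small as possible. *)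

theory Defs
  imports Main
begin

text \<open>A design whose (multi)set of blocks is given as a family B indexed by a finite
  index set I (so repeated blocks correspond to distinct indices).\<close>

definition is_bibd :: "'a set \<Rightarrow> 'i set \<Rightarrow> ('i \<Rightarrow> 'a set) \<Rightarrow> nat \<Rightarrow> nat \<Rightarrow> nat \<Rightarrow> bool" where
  "is_bibd X I B v k lam \<longleftrightarrow> finite X \<and> card X = v \<and> finite I \<and>
     (\<forall>i\<in>I. B i \<subseteq> X \<and> card (B i) = k) \<and>
     (\<forall>x\<in>X. \<forall>y\<in>X. x \<noteq> y \<longrightarrow> card {i\<in>I. x \<in> B i \<and> y \<in> B i} = lam)"

definition strong_nesting :: "'a set \<Rightarrow> 'i set \<Rightarrow> ('i \<Rightarrow> 'a set) \<Rightarrow> 'a set \<Rightarrow> ('i \<Rightarrow> 'a) \<Rightarrow> bool" where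
  "strong_nesting X I B Y phi \<longleftrightarrow> finite Y \<and> X \<subseteq> Y \<and>
     (\<forall>i\<in>I. phi i \<in> Y \<and> phi i \<notin> B i) \<and>
     inj_on (\<lambda>(i, x). {x, phi i}) (SIGMA i:I. B i)"

text \<open>The complete (v,2,1) design on X: blocks are all 2-subsets, indexed by themselves.\<close>

definition pair_blocks :: "'a set \<Rightarrow> 'a set set" where
  "pair_blocks X = {A. A \<subseteq> X \<and> card A = 2}"

end

theory Submission
  imports Defs
begin


lemma families:
  assumes "finite Y" "X \<subseteq> Y"
  and cover: "\<And>A. A \<in> I \<Longrightarrow> \<exists>c\<in>Y. M c A"
  and i: "\<And>c A. M c A \<Longrightarrow> c \<notin> A"
  and ii: "\<And>c A A' x. M c A \<Longrightarrow> M c A' \<Longrightarrow> x \<in> A \<Longrightarrow> x \<in> A' \<Longrightarrow> A = A'"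
  and iii: "\<And>c c' A A'. M c A \<Longrightarrow> M c' A' \<Longrightarrow> c \<in> A' \<Longrightarrow> c' \<in> A \<Longrightarrow> False"
  shows "strong_nesting X I id Y (\<lambda>A. SOME c. c \<in> Y \<and> M c A)"
proof -
  define phi where "phi = (\<lambda>A. SOME c. c \<in> Y \<and> M c A)"
  have ph: "phi A \<in> Y \<and> M (phi A) A" if "A \<in> I" for A
    unfolding phi_def using cover[OF that] by (metis (mono_tags, lifting) someI_ex)
  have inj: "inj_on (\<lambda>(i, x). {x, phi i}) (SIGMA i:I. id i)"
  proof (rule inj_onI, clarsimp)
    fix A x A' x'
    assume a: "A \<in> I" "x \<in> A" "A' \<in> I" "x' \<in> A'" and e: "{x, phi A} = {x', phi A'}"
    from e have "(x = x' \<and> phi A = phi A') \<or> (x = phi A' \<and> phi A = x')"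
      by (simp add: doubleton_eq_iff)
    then show "A = A' \<and> x = x'"
    proof
      assume h: "x = x' \<and> phi A = phi A'"
      then show ?thesis using ii[of "phi A" A A' x] ph[OF a(1)] ph[OF a(3)] a by auto
    next
      assume h: "x = phi A' \<and> phi A = x'"
      then show ?thesis using iii[of "phi A" A "phi A'" A'] ph[OF a(1)] ph[OF a(3)] a by auto
    qed
  qed
  have "Sigma I id = (SIGMA i:I. i)" by (simp add: id_def)
  show ?thesis
    unfolding strong_nesting_def phi_def[symmetric] \<open>Sigma I id = (SIGMA i:I. i)\<close>
    using assms(1,2) ph i inj by auto
qed

lemma lower:
  fixes X :: "'a set"
  assumes fin: "finite X" and cX: "card X = 4*t+1" and t: "t \<ge> 1"
    and sn: "strong_nesting X (pair_blocks X) id Y phi"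
  shows "6*t+2 \<le> card Y"
proof -
  let ?P = "pair_blocks X"
  have snd: "finite Y \<and> X \<subseteq> Y \<and> (\<forall>i\<in>?P. phi i \<in> Y \<and> phi i \<notin> id i) \<and> inj_on (\<lambda>(i, x). {x, phi i}) (SIGMA i:?P. id i)"
    using sn unfolding strong_nesting_def .
  have finY: "finite Y" and XY: "X \<subseteq> Y" and phY: "\<And>A. A \<in> ?P \<Longrightarrow> phi A \<in> Y"
    and phA: "\<And>A. A \<in> ?P \<Longrightarrow> phi A \<notin> A"
    and inj: "inj_on (\<lambda>(i, x). {x, phi i}) (SIGMA i:?P. id i)"
    using snd by auto
  have finP: "finite ?P" unfolding pair_blocks_def
    by (rule finite_subset[of _ "Pow X"]) (use fin in auto)
  have cP: "card ?P = (4*t+1)*(2*t)"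
  proof -
    have "card ?P = card X choose 2" unfolding pair_blocks_def using n_subsets[OF fin] by simp
    also have "\<dots> = (4*t+1)*(4*t) div 2" using cX by (simp add: choose_two)
    also have "\<dots> = (4*t+1)*(2*t)" by simp
    finally show ?thesis .
  qed
  have card2: "card A = 2" "finite A" if "A \<in> ?P" for A
    using that unfolding pair_blocks_def by (auto intro: card_ge_0_finite)
  define I1 where "I1 = {A \<in> ?P. phi A \<in> X}"
  define I2 where "I2 = {A \<in> ?P. phi A \<notin> X}"
  define J where "J = (\<lambda>y. {A \<in> ?P. phi A = y})"
  have sig: "card (SIGMA A:S. A) = 2 * card S" if "S \<subseteq> ?P" for S
  proof -
    have fS: "finite S" using finite_subset[OF that finP] .
    have "card (SIGMA A:S. A) = (\<Sum>A\<in>S. card A)" using fS card2 that by (subst card_SigmaI) auto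
    also have "\<dots> = (\<Sum>A\<in>S. 2)" using card2 that by (intro sum.cong) auto
    finally show ?thesis by simp
  qed
  have c1: "2 * card I1 \<le> card ?P"
  proof -
    have "card (SIGMA A:I1. A) \<le> card ?P"
    proof (rule card_inj_on_le[where f="\<lambda>(i, x). {x, phi i}"])
      show "inj_on (\<lambda>(i, x). {x, phi i}) (SIGMA A:I1. A)"
        by (rule inj_on_subset[OF inj]) (auto simp: I1_def)
      show "(\<lambda>(i, x). {x, phi i}) ` (SIGMA A:I1. A) \<subseteq> ?P"
      proof clarsimp
        fix A x assume "A \<in> I1" "x \<in> A"
        then have "A \<in> ?P" "phi A \<in> X" "x \<in> X" "x \<noteq> phi A" using phA unfolding I1_def pair_blocks_def by auto
        then show "{x, phi A} \<in> ?P" unfolding pair_blocks_def by auto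
      qed
      show "finite ?P" by (rule finP)
    qed
    then show ?thesis using sig[of I1] by (auto simp: I1_def)
  qed
  have c2: "card (J y) \<le> 2*t" if "y \<in> Y - X" for y
  proof -
    have "card (SIGMA A:J y. A) \<le> card X"
    proof (rule card_inj_on_le[where f="snd"])
      show "inj_on snd (SIGMA A:J y. A)"
      proof (rule inj_onI, clarsimp simp: J_def)
        fix A x A' assume h: "A \<in> ?P" "A' \<in> ?P" "x \<in> A" "x \<in> A'" "y = phi A" "phi A' = phi A"
        then have "{x, phi A} = {x, phi A'}" by simp
        then show "A = A'" using inj h unfolding inj_on_def by auto
      qed
      show "snd ` (SIGMA A:J y. A) \<subseteq> X" by (auto simp: J_def pair_blocks_def)
    qed (rule fin)
    then have "2 * card (J y) \<le> 4*t+1" using sig[of "J y"] cX by (auto simp: J_def)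
    then show ?thesis by linarith
  qed
  have c3: "card I2 \<le> (card Y - card X) * (2*t)"
  proof -
    have "I2 \<subseteq> (\<Union>y\<in>Y - X. J y)" using phY by (auto simp: I2_def J_def)
    then have "card I2 \<le> card (\<Union>y\<in>Y - X. J y)"
      by (intro card_mono finite_subset[OF _ finP]) (auto simp: J_def)
    also have "\<dots> \<le> (\<Sum>y\<in>Y-X. card (J y))" using finY by (intro card_UN_le) auto
    also have "\<dots> \<le> card (Y - X) * (2*t)" using c2 by (intro sum_bounded_above[where K="2*t", simplified]) auto
    finally show ?thesis using card_Diff_subset[OF finite_subset[OF XY finY] XY] by simp
  qed
  have "card ?P = card I1 + card I2"
  proof -
    have "?P = I1 \<union> I2" "I1 \<inter> I2 = {}" by (auto simp: I1_def I2_def)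
    then show ?thesis using finP by (metis card_Un_disjoint finite_Un)
  qed
  then have "(4*t+1)*(2*t) \<le> 2 * ((card Y - card X) * (2*t))" using c1 c3 cP by linarith
  then have "(4*t+1)*(2*t) \<le> (2*(card Y - card X)) * (2*t)" by (simp add: algebra_simps)
  then have "4*t+1 \<le> 2*(card Y - card X)" using t by (subst (asm) mult_le_cancel2) simp
  moreover have "card X \<le> card Y" using card_mono[OF finY XY] .
  ultimately show ?thesis using cX by linarith
qed

lemma bibd:
  assumes "finite X" "card X = v"
  shows "is_bibd X (pair_blocks X) id v 2 1"
proof -
  have finP: "finite (pair_blocks X)" unfolding pair_blocks_def
    by (rule finite_subset[of _ "Pow X"]) (use assms in auto)
  have eq: "{i \<in> pair_blocks X. x \<in> id i \<and> y \<in> id i} = {{x,y}}" if "x \<in> X" "y \<in> X" "x \<noteq> y" for x y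
  proof -
    have key: "i = {x,y}" if h: "i \<in> pair_blocks X" "x \<in> i" "y \<in> i" for i
    proof -
      have "card i = 2" using h unfolding pair_blocks_def by auto
      then obtain a b where "i = {a,b}" "a \<noteq> b" by (auto simp: card_2_iff)
      then show "i = {x,y}" using h \<open>x \<noteq> y\<close> by auto
    qed
    have xy: "{x,y} \<in> pair_blocks X" using that unfolding pair_blocks_def by auto
    show ?thesis
    proof (rule set_eqI)
      fix i show "i \<in> {i \<in> pair_blocks X. x \<in> id i \<and> y \<in> id i} \<longleftrightarrow> i \<in> {{x,y}}"
        using xy key[of i] by auto
    qed
  qed
  have cnt: "\<forall>x\<in>X. \<forall>y\<in>X. x \<noteq> y \<longrightarrow> card {i \<in> pair_blocks X. x \<in> id i \<and> y \<in> id i} = 1"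
    using eq by simp
  have blk: "\<forall>i\<in>pair_blocks X. id i \<subseteq> X \<and> card (id i) = 2" unfolding pair_blocks_def by simp
  show ?thesis unfolding is_bibd_def using assms finP blk cnt by blast
qed



definition M0 :: "int \<Rightarrow> int \<Rightarrow> int set \<Rightarrow> bool" where
 "M0 T c A \<longleftrightarrow>
  (0 \<le> c \<and> c < 4*T \<and> (A = {4*T, (c - T) mod (4*T)} \<or>
      (\<exists>j. 1 \<le> j \<and> j < T \<and> A = {(c - (T+j)) mod (4*T), (c - (T-j)) mod (4*T)})))
  \<or> (c = 4*T+1 \<and> (\<exists>a. 0 \<le> a \<and> a < 2*T \<and> A = {a, a+2*T}))
  \<or> (\<exists>d a. 1 \<le> d \<and> d < 2*T \<and> odd d \<and> 0 \<le> a \<and> a < 4*T \<and> c = 4*T+1+d+(a mod 2)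
        \<and> A = {a, (a+d) mod (4*T)})"

lemma dvd0: fixes n z :: int assumes "n dvd z" "-n < z" "z < n" shows "z = 0"
proof -
  obtain q where q: "z = n * q" using assms(1) by (auto elim: dvdE)
  have n: "n > 0" using assms by simp
  have "q = 0"
  proof (rule ccontr)
    assume "q \<noteq> 0"
    then have "q \<ge> 1 \<or> q \<le> -1" by linarith
    then show False
    proof
      assume "q \<ge> 1" then have "n * q \<ge> n * 1" using n by (intro mult_left_mono) auto
      then show False using q assms by linarith
    next
      assume "q \<le> -1" then have "n * q \<le> n * (-1)" using n by (intro mult_left_mono) auto
      then show False using q assms by linarith
    qed
  qed
  then show ?thesis using q by simp
qed

lemma modeq: fixes n :: int assumes "(c - k) mod n = (c - k') mod n" shows "n dvd (k' - k)"
proof -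
  have "n dvd ((c - k) - (c - k'))" using assms by (simp add: mod_eq_dvd_iff)
  then show ?thesis by simp
qed

lemma M0_sub: assumes "T \<ge> 1" "M0 T c A" shows "0 \<le> c \<and> c \<le> 6*T+1 \<and> A \<subseteq> {0..4*T}"
  using assms unfolding M0_def
  by (auto simp: pos_mod_bound less_imp_le)

lemma M0_own: assumes "T \<ge> 1" "M0 T c A" "c < 4*T" "x \<in> A" "x \<noteq> 4*T"
  shows "\<exists>k. 1 \<le> k \<and> k \<le> 2*T-1 \<and> x = (c - k) mod (4*T)"
proof -
  have "A = {4*T, (c - T) mod (4*T)} \<or>
      (\<exists>j. 1 \<le> j \<and> j < T \<and> A = {(c - (T+j)) mod (4*T), (c - (T-j)) mod (4*T)})"
    using assms unfolding M0_def by auto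
  then show ?thesis
  proof
    assume "A = {4*T, (c - T) mod (4*T)}"
    then show ?thesis using assms by (intro exI[of _ T]) auto
  next
    assume "\<exists>j. 1 \<le> j \<and> j < T \<and> A = {(c - (T+j)) mod (4*T), (c - (T-j)) mod (4*T)}"
    then obtain j where j: "1 \<le> j" "j < T" "A = {(c - (T+j)) mod (4*T), (c - (T-j)) mod (4*T)}" by blast
    then have "x = (c - (T+j)) mod (4*T) \<or> x = (c - (T-j)) mod (4*T)" using assms by auto
    then show ?thesis
    proof
      assume "x = (c - (T+j)) mod (4*T)" then show ?thesis using j by (intro exI[of _ "T+j"]) auto
    next
      assume "x = (c - (T-j)) mod (4*T)" then show ?thesis using j by (intro exI[of _ "T-j"]) auto
    qed
  qed
qed

lemma M0_i: assumes "T \<ge> 1" "M0 T c A" shows "c \<notin> A"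
proof
  assume cA: "c \<in> A"
  have s: "0 \<le> c \<and> c \<le> 6*T+1 \<and> A \<subseteq> {0..4*T}" using M0_sub[OF assms] .
  show False
  proof (cases "c < 4*T")
    case True
    then have "c \<noteq> 4*T" by simp
    from M0_own[OF assms True cA this] obtain k where k: "1 \<le> k" "k \<le> 2*T-1" "c = (c - k) mod (4*T)" by blast
    then have "(c - 0) mod (4*T) = (c - k) mod (4*T)" using s True by simp
    from modeq[OF this] have "4*T dvd k" by simp
    then show False using dvd0[of "4*T" k] k assms(1) by simp
  next
    case False
    then have "c \<ge> 4*T+1" using assms unfolding M0_def by auto
    then show False using s cA by auto
  qed
qed

lemma M0_c: assumes "M0 T c A" shows "c < 4*T \<or> c \<ge> 4*T+1"
  using assms unfolding M0_def by auto

lemma M0_iii: assumes T: "T \<ge> 1" and h: "M0 T c A" "M0 T c' A'" "c \<in> A'" "c' \<in> A" shows False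
proof -
  have s: "0 \<le> c \<and> c \<le> 6*T+1 \<and> A \<subseteq> {0..4*T}" "0 \<le> c' \<and> c' \<le> 6*T+1 \<and> A' \<subseteq> {0..4*T}"
    using M0_sub[OF T h(1)] M0_sub[OF T h(2)] by auto
  have c: "c < 4*T" using s h(3) M0_c[OF h(1)] by auto
  have c': "c' < 4*T" using s h(4) M0_c[OF h(2)] by auto
  obtain k where k: "1 \<le> k" "k \<le> 2*T-1" "c' = (c - k) mod (4*T)"
    using M0_own[OF T h(1) c h(4)] c' by auto
  obtain k' where k': "1 \<le> k'" "k' \<le> 2*T-1" "c = (c' - k') mod (4*T)"
    using M0_own[OF T h(2) c' h(3)] c by auto
  have "(c - 0) mod (4*T) = (c - (k+k')) mod (4*T)"
  proof -
    have "(c - 0) mod (4*T) = c" using s c by simp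
    also have "\<dots> = ((c - k) mod (4*T) - k') mod (4*T)" using k k' by simp
    also have "\<dots> = (c - (k+k')) mod (4*T)" by (simp add: mod_diff_left_eq algebra_simps)
    finally show ?thesis .
  qed
  from modeq[OF this] have "4*T dvd (k+k')" by simp
  then show False using dvd0[of "4*T" "k+k'"] k k' by simp
qed

lemma M0_ii: assumes T: "T \<ge> 1" and h: "M0 T c A" "M0 T c A'" "x \<in> A" "x \<in> A'" shows "A = A'"
proof (cases "c < 4*T")
  case True
  let ?n = "4*T"
  have sA: "A \<subseteq> {0..4*T}" "A' \<subseteq> {0..4*T}" using M0_sub[OF T h(1)] M0_sub[OF T h(2)] by auto
  have cA: "A = {4*T, (c - T) mod (4*T)} \<or>
      (\<exists>j. 1 \<le> j \<and> j < T \<and> A = {(c - (T+j)) mod (4*T), (c - (T-j)) mod (4*T)})"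
    using h(1) True unfolding M0_def by auto
  have cA': "A' = {4*T, (c - T) mod (4*T)} \<or>
      (\<exists>j. 1 \<le> j \<and> j < T \<and> A' = {(c - (T+j)) mod (4*T), (c - (T-j)) mod (4*T)})"
    using h(2) True unfolding M0_def by auto
  have lt: "(c - k) mod (4*T) < 4*T" for k using T by simp
  have neq: "(c - T) mod (4*T) \<noteq> (c - (T+j)) mod (4*T) \<and> (c - T) mod (4*T) \<noteq> (c - (T-j)) mod (4*T)"
    if "1 \<le> j" "j < T" for j
  proof safe
    assume "(c - T) mod (4*T) = (c - (T+j)) mod (4*T)"
    from modeq[OF this] have "4*T dvd j" by simp
    then show False using dvd0[of "4*T" j] that by simp
  next
    assume "(c - T) mod (4*T) = (c - (T-j)) mod (4*T)"
    from modeq[OF this] have "4*T dvd -j" by simp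
    then show False using dvd0[of "4*T" "-j"] that by simp
  qed
  have jj: "j = j'" if "1 \<le> j" "j < T" "1 \<le> j'" "j' < T"
    "x \<in> {(c - (T+j)) mod (4*T), (c - (T-j)) mod (4*T)}"
    "x \<in> {(c - (T+j')) mod (4*T), (c - (T-j')) mod (4*T)}" for j j'
  proof -
    have "4*T dvd (j' - j) \<or> 4*T dvd (j + j') \<or> 4*T dvd (-(j+j')) \<or> 4*T dvd (j - j')"
      using that(5,6) modeq[of c "T+j" "4*T" "T+j'"] modeq[of c "T+j" "4*T" "T-j'"]
        modeq[of c "T-j" "4*T" "T+j'"] modeq[of c "T-j" "4*T" "T-j'"]
      by (auto simp: algebra_simps)
    then show ?thesis using that(1-4) dvd0[of "4*T" "j'-j"] dvd0[of "4*T" "j+j'"]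
        dvd0[of "4*T" "-(j+j')"] dvd0[of "4*T" "j-j'"] by auto
  qed
  show ?thesis
  proof (cases "A = {4*T, (c - T) mod (4*T)}")
    case A1: True
    show ?thesis
    proof (cases "A' = {4*T, (c - T) mod (4*T)}")
      case True then show ?thesis using A1 by simp
    next
      case False
      then obtain j where j: "1 \<le> j" "j < T" "A' = {(c - (T+j)) mod (4*T), (c - (T-j)) mod (4*T)}"
        using cA' by blast
      have "x \<noteq> 4*T" using h(4) j(3) lt by (metis insert_iff less_irrefl singletonD)
      then have "x = (c - T) mod (4*T)" using h(3) A1 by auto
      then show ?thesis using h(4) j neq[OF j(1,2)] by auto
    qed
  next
    case A1: False
    then obtain j where j: "1 \<le> j" "j < T" "A = {(c - (T+j)) mod (4*T), (c - (T-j)) mod (4*T)}"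
      using cA by blast
    show ?thesis
    proof (cases "A' = {4*T, (c - T) mod (4*T)}")
      case True
      have "x \<noteq> 4*T" using h(3) j(3) lt by (metis insert_iff less_irrefl singletonD)
      then have "x = (c - T) mod (4*T)" using h(4) True by auto
      then show ?thesis using h(3) j neq[OF j(1,2)] by auto
    next
      case False
      then obtain j' where j': "1 \<le> j'" "j' < T" "A' = {(c - (T+j')) mod (4*T), (c - (T-j')) mod (4*T)}"
        using cA' by blast
      have "j = j'" using jj[OF j(1,2) j'(1,2)] h(3,4) j(3) j'(3) by auto
      then show ?thesis using j(3) j'(3) by simp
    qed
  qed
next
  case False
  then have c1: "c \<ge> 4*T+1" using M0_c[OF h(1)] by auto
  show ?thesis
  proof (cases "c = 4*T+1")
    case True
    then obtain a a' where a: "0 \<le> a" "a < 2*T" "A = {a, a+2*T}" "0 \<le> a'" "a' < 2*T" "A' = {a', a'+2*T}"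
      using h(1,2) unfolding M0_def by auto
    then have "a = a'" using h(3,4) by auto
    then show ?thesis using a by simp
  next
    case False
    then obtain d a where a: "1 \<le> d" "d < 2*T" "odd d" "0 \<le> a" "a < 4*T" "c = 4*T+1+d+(a mod 2)"
        "A = {a, (a+d) mod (4*T)}"
      using h(1) c1 unfolding M0_def by auto
    obtain d' a' where a': "1 \<le> d'" "d' < 2*T" "odd d'" "0 \<le> a'" "a' < 4*T" "c = 4*T+1+d'+(a' mod 2)"
        "A' = {a', (a'+d') mod (4*T)}"
      using h(2) c1 False unfolding M0_def by auto
    have p: "a mod 2 = a' mod 2"
    proof (rule ccontr)
      assume "a mod 2 \<noteq> a' mod 2"
      then have "d - d' = 1 \<or> d - d' = -1" using a(6) a'(6) by (auto simp: mod2_eq_if split: if_splits)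
      moreover have "even (d - d')" using a(3) a'(3) by simp
      ultimately show False by (metis even_minus odd_one)
    qed
    then have dd: "d = d'" using a(6) a'(6) by simp
    have par: "((y + d) mod (4*T)) mod 2 \<noteq> y mod 2" for y
    proof -
      have "((y + d) mod (4*T)) mod 2 = (y + d) mod 2" by (rule mod_mod_cancel) simp
      then show ?thesis using a(3) by (auto simp: mod2_eq_if split: if_splits)
    qed
    have "a = a'"
    proof -
      have "x = a \<or> x = (a+d) mod (4*T)" "x = a' \<or> x = (a'+d) mod (4*T)" using h(3,4) a(7) a'(7) dd by auto
      then consider "a = a'" | "a = (a'+d) mod (4*T)" | "(a+d) mod (4*T) = a'" | "(a+d) mod (4*T) = (a'+d) mod (4*T)"
        by metis
      then show ?thesis
      proof cases
        case 2 then show ?thesis using par[of a'] p by simp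
      next
        case 3 then show ?thesis using par[of a] p by simp
      next
        case 4
        then have "4*T dvd (a + d) - (a' + d)" by (simp add: mod_eq_dvd_iff)
        then have "4*T dvd a - a'" by simp
        then show ?thesis using dvd0[of "4*T" "a - a'"] a a' by simp
      qed simp
    qed
    then show ?thesis using a(7) a'(7) dd by simp
  qed
qed


lemma M0_cover_xy: assumes T: "T \<ge> 1" and xy: "0 \<le> x" "x < y" "y \<le> 4*T" shows "\<exists>c. M0 T c {x,y}"
proof (cases "y = 4*T")
  case True
  define c where "c = (x + T) mod (4*T)"
  have "(c - T) mod (4*T) = x"
  proof -
    have "(c - T) mod (4*T) = (x + T - T) mod (4*T)" unfolding c_def by (simp add: mod_diff_left_eq)
    also have "\<dots> = x" using xy True by simp
    finally show ?thesis .
  qed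
  moreover have "0 \<le> c" "c < 4*T" unfolding c_def using T by auto
  ultimately have "M0 T c {x,y}" unfolding M0_def using True by (auto simp: insert_commute)
  then show ?thesis by blast
next
  case False
  then have y: "y < 4*T" using xy by simp
  define e where "e = y - x"
  have e: "1 \<le> e" "e < 4*T" "y = x + e" using xy y unfolding e_def by auto
  consider "e = 2*T" | "odd e" "e < 2*T" | "odd e" "e > 2*T" | "even e" "e < 2*T" | "even e" "e > 2*T"
    by fastforce
  then show ?thesis
  proof cases
    case 1
    then have "M0 T (4*T+1) {x,y}" unfolding M0_def using e xy y
      by (intro disjI2 disjI1) (auto intro!: exI[of _ x])
    then show ?thesis by blast
  next
    case 2
    have "(x + e) mod (4*T) = y" using e xy y by simp
    then have "M0 T (4*T+1+e+(x mod 2)) {x,y}" unfolding M0_def using 2 e xy y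
      by (intro disjI2) (rule exI[of _ e], rule exI[of _ x], auto)
    then show ?thesis by blast
  next
    case 3
    define d where "d = 4*T - e"
    have d: "1 \<le> d" "d < 2*T" "odd d" using 3 e unfolding d_def by auto
    have "(y + d) mod (4*T) = x"
    proof -
      have "(y + d) mod (4*T) = (x + 1 * (4*T)) mod (4*T)" unfolding d_def using e by simp
      also have "\<dots> = x" using xy y by (subst mod_mult_self1) simp
      finally show ?thesis .
    qed
    then have "M0 T (4*T+1+d+(y mod 2)) {y,x}" unfolding M0_def using d e xy y
      by (intro disjI2) (rule exI[of _ d], rule exI[of _ y], auto)
    then show ?thesis by (auto simp: insert_commute)
  next
    case 4
    then obtain j where j: "e = 2*j" by (auto elim: evenE)
    define c where "c = (x + j + T) mod (4*T)"
    have "(c - (T+j)) mod (4*T) = x"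
    proof -
      have "(c - (T+j)) mod (4*T) = (x + j + T - (T+j)) mod (4*T)" unfolding c_def by (simp add: mod_diff_left_eq)
      also have "\<dots> = x" using xy y by simp
      finally show ?thesis .
    qed
    moreover have "(c - (T-j)) mod (4*T) = y"
    proof -
      have "(c - (T-j)) mod (4*T) = (x + j + T - (T-j)) mod (4*T)" unfolding c_def by (simp add: mod_diff_left_eq)
      also have "\<dots> = y" using xy y e j by simp
      finally show ?thesis .
    qed
    moreover have "0 \<le> c" "c < 4*T" unfolding c_def using T by auto
    moreover have "1 \<le> j" "j < T" using j e 4 by auto
    ultimately have "M0 T c {x,y}" unfolding M0_def by auto
    then show ?thesis by blast
  next
    case 5
    then obtain j where j: "4*T - e = 2*j" by (metis dvd_diff even_mult_iff evenE even_numeral)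
    define c where "c = (y + j + T) mod (4*T)"
    have "(c - (T+j)) mod (4*T) = y"
    proof -
      have "(c - (T+j)) mod (4*T) = (y + j + T - (T+j)) mod (4*T)" unfolding c_def by (simp add: mod_diff_left_eq)
      also have "\<dots> = y" using xy y by simp
      finally show ?thesis .
    qed
    moreover have "(c - (T-j)) mod (4*T) = x"
    proof -
      have "(c - (T-j)) mod (4*T) = (y + j + T - (T-j)) mod (4*T)" unfolding c_def by (simp add: mod_diff_left_eq)
      also have "\<dots> = (x + 1 * (4*T)) mod (4*T)" using e j by (simp add: algebra_simps)
      also have "\<dots> = x" using xy y by (subst mod_mult_self1) simp
      finally show ?thesis .
    qed
    moreover have "0 \<le> c" "c < 4*T" unfolding c_def using T by auto
    moreover have "1 \<le> j" "j < T" using j e 5 by auto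
    ultimately have "M0 T c {y,x}" unfolding M0_def by auto
    then show ?thesis by (auto simp: insert_commute)
  qed
qed

lemma M0_cover: assumes T: "T \<ge> 1" and A: "A \<subseteq> {0..4*T}" "card A = 2" shows "\<exists>c. M0 T c A"
proof -
  obtain x y where xy: "A = {x,y}" "x \<noteq> y" using A(2) by (auto simp: card_2_iff)
  show ?thesis
  proof (cases "x < y")
    case True then show ?thesis using M0_cover_xy[OF T, of x y] xy A(1) by auto
  next
    case False then have "y < x" using xy by simp
    then show ?thesis using M0_cover_xy[OF T, of y x] xy A(1) by (auto simp: insert_commute)
  qed
qed


lemma exists_nesting:
  fixes X :: "'a set" and t :: nat
  assumes inf: "infinite (UNIV :: 'a set)" and t: "t \<ge> 1" and fin: "finite X" and cX: "card X = 4*t+1"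
  shows "\<exists>Y phi. strong_nesting X (pair_blocks X) id Y phi \<and> card Y = 6*t+2"
proof -
  define T where "T = int t"
  have T: "T \<ge> 1" using t unfolding T_def by simp
  define X0 where "X0 = {0..4*T}"
  define Y0 where "Y0 = {0..6*T+1}"
  have X0Y0: "X0 \<subseteq> Y0" unfolding X0_def Y0_def using T by auto
  obtain g where g: "bij_betw g {0..<4*t+1} X" using ex_bij_betw_nat_finite[OF fin] cX by auto
  have "infinite (UNIV - X)" using inf fin by simp
  then obtain h :: "nat \<Rightarrow> 'a" where h: "inj h" "range h \<subseteq> UNIV - X"
    using infinite_countable_subset by blast
  define f where "f = (\<lambda>i::int. if i \<le> 4*T then g (nat i) else h (nat i))"
  have gX: "g (nat i) \<in> X" if "0 \<le> i" "i \<le> 4*T" for i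
    using g that unfolding bij_betw_def T_def by auto
  have injf: "inj_on f Y0"
  proof (rule inj_onI)
    fix i j assume ij: "i \<in> Y0" "j \<in> Y0" "f i = f j"
    show "i = j"
    proof (cases "i \<le> 4*T")
      case True note i = this
      show ?thesis
      proof (cases "j \<le> 4*T")
        case True
        then have "g (nat i) = g (nat j)" using i ij unfolding f_def by simp
        moreover have "nat i \<in> {0..<4*t+1}" "nat j \<in> {0..<4*t+1}" using i True ij unfolding Y0_def T_def by auto
        ultimately have "nat i = nat j" using g unfolding bij_betw_def inj_on_def by blast
        then show ?thesis using ij unfolding Y0_def by (simp add: eq_nat_nat_iff)
      next
        case False
        then have "g (nat i) = h (nat j)" using i ij unfolding f_def by simp
        moreover have "g (nat i) \<in> X" using gX i ij unfolding Y0_def by auto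
        moreover have "h (nat j) \<notin> X" using h by auto
        ultimately show ?thesis by simp
      qed
    next
      case False note i = this
      show ?thesis
      proof (cases "j \<le> 4*T")
        case True
        then have "h (nat i) = g (nat j)" using i ij unfolding f_def by simp
        moreover have "g (nat j) \<in> X" using gX True ij unfolding Y0_def by auto
        moreover have "h (nat i) \<notin> X" using h by auto
        ultimately show ?thesis by simp
      next
        case False
        then have "h (nat i) = h (nat j)" using i ij unfolding f_def by simp
        then have "nat i = nat j" using h(1) by (simp add: inj_eq)
        then show ?thesis using ij unfolding Y0_def by (simp add: eq_nat_nat_iff)
      qed
    qed
  qed
  have fX0: "f ` X0 = X"
  proof
    show "f ` X0 \<subseteq> X" using gX unfolding f_def X0_def by auto
  next
    show "X \<subseteq> f ` X0"
    proof
      fix x assume "x \<in> X"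
      then obtain k where k: "k < 4*t+1" "x = g k" using g unfolding bij_betw_def by auto
      then have "int k \<in> X0" "f (int k) = x" unfolding X0_def f_def T_def by auto
      then show "x \<in> f ` X0" by force
    qed
  qed
  define M where "M = (\<lambda>c' A'. \<exists>c A. M0 T c A \<and> c' = f c \<and> A' = f ` A)"
  have sub: "c \<in> Y0" "A \<subseteq> Y0" "A \<subseteq> X0" if "M0 T c A" for c A
    using M0_sub[OF T that] X0Y0 unfolding Y0_def X0_def by auto
  have sn: "strong_nesting (f ` X0) (pair_blocks (f ` X0)) id (f ` Y0) (\<lambda>A. SOME c. c \<in> f ` Y0 \<and> M c A)"
  proof (rule families)
    show "finite (f ` Y0)" unfolding Y0_def by simp
    show "f ` X0 \<subseteq> f ` Y0" using X0Y0 by auto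
  next
    fix A' assume A': "A' \<in> pair_blocks (f ` X0)"
    define A where "A = X0 \<inter> f -` A'"
    have fA: "f ` A = A'" using A' unfolding A_def pair_blocks_def by auto
    have "inj_on f A" by (rule inj_on_subset[OF injf]) (use X0Y0 in \<open>auto simp: A_def\<close>)
    then have "card A = 2" using card_image fA A' unfolding pair_blocks_def by fastforce
    moreover have "A \<subseteq> {0..4*T}" unfolding A_def X0_def by auto
    ultimately obtain c where c: "M0 T c A" using M0_cover[OF T] by blast
    then have "M (f c) A'" unfolding M_def using fA by auto
    then show "\<exists>c\<in>f ` Y0. M c A'" using sub(1)[OF c] by blast
  next
    fix c' A' assume "M c' A'"
    then obtain c A where h: "M0 T c A" "c' = f c" "A' = f ` A" unfolding M_def by auto
    show "c' \<notin> A'"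
    proof
      assume "c' \<in> A'"
      then have "c \<in> A" using h inj_on_image_mem_iff[OF injf sub(1)[OF h(1)] sub(2)[OF h(1)]] by simp
      then show False using M0_i[OF T h(1)] by simp
    qed
  next
    fix c' A1' A2' x' assume m: "M c' A1'" "M c' A2'" "x' \<in> A1'" "x' \<in> A2'"
    obtain c1 A1 where h1: "M0 T c1 A1" "c' = f c1" "A1' = f ` A1" using m(1) unfolding M_def by auto
    obtain c2 A2 where h2: "M0 T c2 A2" "c' = f c2" "A2' = f ` A2" using m(2) unfolding M_def by auto
    have "c1 = c2" using h1 h2 injf sub[OF h1(1)] sub[OF h2(1)] unfolding inj_on_def by metis
    obtain x1 x2 where x: "x1 \<in> A1" "x' = f x1" "x2 \<in> A2" "x' = f x2" using m h1 h2 by auto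
    have "x1 = x2" using x injf sub[OF h1(1)] sub[OF h2(1)] unfolding inj_on_def by blast
    then have "A1 = A2" using M0_ii[OF T h1(1)] h2(1) x \<open>c1 = c2\<close> by blast
    then show "A1' = A2'" using h1 h2 by simp
  next
    fix c1' c2' A1' A2' assume m: "M c1' A1'" "M c2' A2'" "c1' \<in> A2'" "c2' \<in> A1'"
    obtain c1 A1 where h1: "M0 T c1 A1" "c1' = f c1" "A1' = f ` A1" using m(1) unfolding M_def by auto
    obtain c2 A2 where h2: "M0 T c2 A2" "c2' = f c2" "A2' = f ` A2" using m(2) unfolding M_def by auto
    have "c1 \<in> A2" using m(3) h1 h2 inj_on_image_mem_iff[OF injf sub(1)[OF h1(1)] sub(2)[OF h2(1)]] by simp
    moreover have "c2 \<in> A1" using m(4) h1 h2 inj_on_image_mem_iff[OF injf sub(1)[OF h2(1)] sub(2)[OF h1(1)]] by simp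
    ultimately show False using M0_iii[OF T h1(1) h2(1)] by simp
  qed
  moreover have "card (f ` Y0) = 6*t+2"
  proof -
    have "card (f ` Y0) = card Y0" using card_image[OF injf] .
    also have "\<dots> = 6*t+2" unfolding Y0_def T_def by simp
    finally show ?thesis .
  qed
  ultimately show ?thesis unfolding fX0 by blast
qed

theorem theorem4p2:
  fixes X :: "'a set" and t :: nat
  assumes "infinite (UNIV :: 'a set)"
    and "t \<ge> 1"
    and "finite X" and "card X = 4 * t + 1"
  shows "is_bibd X (pair_blocks X) id (4 * t + 1) 2 1
    \<and> (\<exists>Y phi. strong_nesting X (pair_blocks X) id Y phi \<and> card Y = 6 * t + 2)
    \<and> (\<forall>Y phi. strong_nesting X (pair_blocks X) id Y phi \<longrightarrow> 6 * t + 2 \<le> card Y)"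
  using bibd[OF assms(3,4)] exists_nesting[OF assms] lower[OF assms(3,4,2)] by blast

end
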